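(* Let $X \in \mathbb{R}^{d\times n}$, $V_0, V_T \in \mathbb{R}^{m\times k}$, $W_0, W_T \in \mathbb{R}^{k\times d}$, and suppose $Y = V_T W_T X$ and $V_0 W_0 X \neq Y$. Define $\mathbf{z}(\alpha) = (V_0 + \alpha D_1)(W_0 + \alpha D_2)X$ for $\alpha\in[0,1]$, where $D_1 = V_T - V_0$ and $D_2 = W_T - W_0$, and let $\mathcal{L}(\alpha) = \frac{1}{2n}\Vert \mathbf{z}(\alpha) - Y\Vert_F^2$. If $\langle \mathbf{z}'(0), \mathbf{z}'(1)\rangle_F > 0$, where $\mathbf{z}'(0) = (D_1 W_0 + V_0 D_2)X$ and $\mathbf{z}'(1) = (D_1 W_T + V_T D_2)X$, then $\mathbf{z}'(\alpha)\neq 0$ for all $\alpha\in[0,1]$, the Gauss length of $\mathbf{z}$ is less than $\pi/2$, and $\alpha\mapsto\mathcal{L}(\alpha)$ is monotonically decreasing (non-increasing) on $[0,1]$.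
   Context: $\langle A, B\rangle_F = \operatorname{tr}(A^\top B)$ is the Frobenius inner product, and matrices in $\mathbb{R}^{m\times n}$ are identified with vectors in $\mathbb{R}^{mn}$. For a smooth curve $\mathbf{z}$ with nonvanishing derivative, let $\hat{\mathbf{v}}(\alpha) = \partial_\alpha \mathbf{z}(\alpha)/\Vert \partial_\alpha \mathbf{z}(\alpha)\Vert$; the Gauss length of $\mathbf{z}$ is $\int_0^1 \Vert \partial_\alpha \hat{\mathbf{v}}(\alpha)\Vert\, d\alpha$. Note $\mathbf{z}'(\alpha) = (D_1W_0 + V_0D_2 + 2\alpha D_1D_2)X$ is affine in $\alpha$. *)

theory Defs
  imports "HOL-Analysis.Analysis"
begin

text \<open>Matrices in R^(m x n) are represented as real^'n^'m (rows indexed by 'm).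
  The inner product / norm on this type is the Frobenius inner product / norm
  (sum over all entries), i.e. matrices are identified with vectors in R^(mn).\<close>

definition zcurve ::
  "real^'k^'m \<Rightarrow> real^'k^'m \<Rightarrow> real^'d^'k \<Rightarrow> real^'d^'k \<Rightarrow> real^'n^'d
     \<Rightarrow> real \<Rightarrow> real^'n^'m" where
  "zcurve V0 VT W0 WT X \<alpha> =
     ((V0 + \<alpha> *\<^sub>R (VT - V0)) ** (W0 + \<alpha> *\<^sub>R (WT - W0))) ** X"

definition unit_tangent :: "(real \<Rightarrow> 'a::real_normed_vector) \<Rightarrow> real \<Rightarrow> 'a" where
  "unit_tangent z \<alpha> =
     vector_derivative z (at \<alpha> within {0..1}) /\<^sub>R norm (vector_derivative z (at \<alpha> within {0..1}))"

definition gauss_integrand :: "(real \<Rightarrow> 'a::real_normed_vector) \<Rightarrow> real \<Rightarrow> real" where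
  "gauss_integrand z \<alpha> = norm (vector_derivative (unit_tangent z) (at \<alpha> within {0..1}))"

definition gauss_length :: "(real \<Rightarrow> 'a::real_normed_vector) \<Rightarrow> real" where
  "gauss_length z = integral {0..1} (gauss_integrand z)"

end

theory Submission
  imports Defs
begin


lemma matrix_add_rdistrib': "((A + B) ** X) = A ** X + B ** X"
  by (simp add: matrix_matrix_mult_def vec_eq_iff sum.distrib algebra_simps)

lemma matrix_diff_rdistrib': "((A - B) ** (X::real^'n^'k)) = A ** X - B ** X"
  by (simp add: matrix_matrix_mult_def vec_eq_iff left_diff_distrib right_diff_distrib sum_subtractf)
lemma matrix_diff_ldistrib': "((X::real^'n^'k) ** (A - B)) = X ** A - X ** B"
  by (simp add: matrix_matrix_mult_def vec_eq_iff left_diff_distrib right_diff_distrib sum_subtractf)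

lemma zexp:
  "zcurve V0 VT W0 WT X a = (V0 ** W0) ** X + a *\<^sub>R ((((VT - V0) ** W0 + V0 ** (WT - W0)) ** X))
      + (a^2) *\<^sub>R (((VT - V0) ** (WT - W0)) ** X)"
  unfolding zcurve_def
  by (simp add: matrix_add_ldistrib matrix_add_rdistrib' matrix_diff_rdistrib' matrix_diff_ldistrib' matrix_mul_assoc matrix_scalar_ac scalar_matrix_assoc[symmetric]
      power2_eq_square algebra_simps)



lemma zder:
  fixes A B C :: "'a::real_normed_vector"
  shows "((\<lambda>a. A + a *\<^sub>R B + (a^2) *\<^sub>R C) has_vector_derivative (B + (2*x) *\<^sub>R C)) (at x)"
  by (auto intro!: derivative_eq_intros simp: algebra_simps)

lemma wnorm:
  fixes B C :: "'a::real_inner"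
  shows "(norm (B + (2*a) *\<^sub>R C))^2 = B\<bullet>B + 4*a*(B\<bullet>C) + 4*a^2*(C\<bullet>C)"
  unfolding power2_norm_eq_inner by (simp add: inner_simps inner_commute algebra_simps power2_eq_square)

lemma unit_der:
  fixes B C :: "'a::real_inner"
  defines "q \<equiv> \<lambda>a. B\<bullet>B + 4*a*(B\<bullet>C) + 4*a^2*(C\<bullet>C)"
  assumes qpos: "q x > 0"
  shows "((\<lambda>a. (1 / sqrt (q a)) *\<^sub>R (B + (2*a) *\<^sub>R C)) has_vector_derivative
     ((1 / sqrt (q x)) *\<^sub>R (2 *\<^sub>R C - ((4*(B\<bullet>C) + 8*x*(C\<bullet>C)) / (2 * q x)) *\<^sub>R (B + (2*x) *\<^sub>R C)))) (at x)"
proof -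
  have qd: "(q has_real_derivative (4*(B\<bullet>C) + 8*x*(C\<bullet>C))) (at x)"
    unfolding q_def by (auto intro!: derivative_eq_intros)
  have sd: "((\<lambda>a. 1 / sqrt (q a)) has_real_derivative
      (- (1 / sqrt (q x)) * ((4*(B\<bullet>C) + 8*x*(C\<bullet>C)) / (2 * q x)))) (at x)"
    using qpos
    by (auto intro!: derivative_eq_intros qd simp: field_simps)
  have wd: "((\<lambda>a. B + (2*a) *\<^sub>R C) has_vector_derivative 2 *\<^sub>R C) (at x)"
    by (auto intro!: derivative_eq_intros)
  show ?thesis
    by (rule has_vector_derivative_eq_rhs[OF has_vector_derivative_scaleR[OF sd wd]])
       (simp add: scaleR_diff_right)
qed

lemma kalg:
  fixes b c e x q k :: real
  assumes q: "q = b + 4*x*c + 4*x^2*e" and qpos: "q > 0" and k: "k = (4*c + 8*x*e) / (2*q)"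
  shows "4*e - 4*k*c - 8*k*x*e + k^2 * q = 4 * (b*e - c^2) / q"
proof -
  have kq: "k * q = 2*c + 4*x*e" using qpos k by (simp add: field_simps)
  have "4*e - 4*k*c - 8*k*x*e + k^2 * q = 4*e - k * (2 * (k*q)) + k * (k*q)"
    by (simp add: kq algebra_simps power2_eq_square)
  also have "\<dots> = 4*e - (k*q)^2 / q" using qpos by (simp add: power2_eq_square)
  also have "\<dots> = (4*e*q - (k*q)^2) / q" using qpos by (simp add: diff_divide_distrib)
  also have "\<dots> = (4*e*q - (2*c + 4*x*e)^2) / q" by (simp only: kq)
  also have "4*e*q - (2*c + 4*x*e)^2 = 4 * (b*e - c^2)" unfolding q by (simp add: algebra_simps power2_eq_square)
  finally show ?thesis .
qed

lemma unit_der_norm: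
  fixes B C :: "'a::real_inner"
  defines "q \<equiv> \<lambda>a. B\<bullet>B + 4*a*(B\<bullet>C) + 4*a^2*(C\<bullet>C)"
  assumes qpos: "q x > 0"
  shows "norm ((1 / sqrt (q x)) *\<^sub>R (2 *\<^sub>R C - ((4*(B\<bullet>C) + 8*x*(C\<bullet>C)) / (2 * q x)) *\<^sub>R (B + (2*x) *\<^sub>R C)))
     = 2 * sqrt ((B\<bullet>B)*(C\<bullet>C) - (B\<bullet>C)^2) / q x"
proof -
  define k where "k = (4*(B\<bullet>C) + 8*x*(C\<bullet>C)) / (2 * q x)"
  have "(norm (2 *\<^sub>R C - k *\<^sub>R (B + (2*x) *\<^sub>R C)))^2
     = 4*(C\<bullet>C) - 4*k*(B\<bullet>C) - 8*k*x*(C\<bullet>C) + k^2 * q x"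
    unfolding q_def
    unfolding power2_norm_eq_inner by (simp add: inner_simps inner_commute algebra_simps power2_eq_square)
  also have "\<dots> = 4 * ((B\<bullet>B)*(C\<bullet>C) - (B\<bullet>C)^2) / q x"
    using kalg[OF _ qpos k_def] unfolding q_def by (simp add: algebra_simps)
  moreover have cs: "(B\<bullet>C)^2 \<le> (B\<bullet>B)*(C\<bullet>C)"
    by (metis Cauchy_Schwarz_ineq)
  ultimately have n1: "(norm (2 *\<^sub>R C - k *\<^sub>R (B + (2*x) *\<^sub>R C)))^2 = 4 * ((B\<bullet>B)*(C\<bullet>C) - (B\<bullet>C)^2) / q x"
    by simp
  have s2: "(2 * sqrt ((B\<bullet>B)*(C\<bullet>C) - (B\<bullet>C)^2) / sqrt (q x))^2 = 4 * ((B\<bullet>B)*(C\<bullet>C) - (B\<bullet>C)^2) / q x"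
    using qpos cs by (simp add: power_divide power_mult_distrib)
  have "norm (2 *\<^sub>R C - k *\<^sub>R (B + (2*x) *\<^sub>R C)) = 2 * sqrt ((B\<bullet>B)*(C\<bullet>C) - (B\<bullet>C)^2) / sqrt (q x)"
    apply (rule power2_eq_imp_eq)
      apply (simp only: n1 s2)
     apply simp
    using qpos cs by simp
  then have "norm ((1 / sqrt (q x)) *\<^sub>R (2 *\<^sub>R C - k *\<^sub>R (B + (2*x) *\<^sub>R C)))
      = (1 / sqrt (q x)) * (2 * sqrt ((B\<bullet>B)*(C\<bullet>C) - (B\<bullet>C)^2) / sqrt (q x))"
    using qpos by (simp only: norm_scaleR) simp
  also have "\<dots> = 2 * sqrt ((B\<bullet>B)*(C\<bullet>C) - (B\<bullet>C)^2) / q x"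
    using qpos by (simp add: field_simps)
  finally show ?thesis unfolding k_def .
qed



lemma arctan_diff_lt:
  fixes X Y :: real
  assumes "1 + X*Y > 0"
  shows "arctan X - arctan Y < pi/2"
proof (cases "Y \<ge> 0")
  case True
  then show ?thesis using arctan_ubound[of X] arctan_less_zero_iff[of Y] by linarith
next
  case False
  show ?thesis
  proof (cases "X \<le> 0")
    case True
    then show ?thesis using arctan_lbound[of Y] arctan_le_zero_iff[of X] by linarith
  next
    case False2: False
    have "X * (-Y) < 1" using assms by simp
    then have "X < 1 / (-Y)" using \<open>\<not> Y \<ge> 0\<close> by (simp add: field_simps)
    then have "arctan X < arctan (1 / (-Y))" by (simp add: arctan_less_iff)
    also have "arctan (1 / (-Y)) = pi/2 + arctan Y"
    proof -
      have Yn: "-Y > 0" using \<open>\<not> Y \<ge> 0\<close> by simp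
      have "arctan (1 / (-Y)) = sgn (-Y) * pi/2 - arctan (-Y)"
        by (rule Transcendental.arctan_inverse) (use Yn in simp)
      moreover have "sgn (-Y) = 1" using Yn by simp
      moreover have "arctan (-Y) = - arctan Y" by (rule arctan_minus)
      ultimately show ?thesis by simp
    qed
    finally show ?thesis by simp
  qed
qed

lemma arctan_deriv_alg:
  fixes b c e sd x :: real
  assumes sd: "sd^2 = b*e - c^2" "sd > 0" and e: "e > 0"
  shows "2*e/sd * inverse (1 + ((2*x*e + c)/sd)^2) = 2* sd / (b + 4*x*c + 4*x^2*e)"
proof -
  have "1 + ((2*x*e + c)/sd)^2 = (sd^2 + (2*x*e + c)^2) / sd^2"
    using sd by (simp add: field_simps power_divide)
  also have "sd^2 + (2*x*e + c)^2 = e * (b + 4*x*c + 4*x^2*e)"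
    using sd by (simp add: algebra_simps power2_eq_square)
  finally have h: "1 + ((2*x*e + c)/sd)^2 = e * (b + 4*x*c + 4*x^2*e) / sd^2" .
  have qpos: "b + 4*x*c + 4*x^2*e > 0"
  proof -
    have "1 + ((2*x*e + c)/sd)^2 > 0" by (simp add: add_pos_nonneg)
    then have "e * (b + 4*x*c + 4*x^2*e) / sd^2 > 0" using h by simp
    moreover have "0 < sd^2" using sd(2) by simp
    then have sp: "c^2 < b*e" using sd(1) by linarith
    ultimately show ?thesis using e sd by (auto simp: zero_less_divide_iff zero_less_mult_iff)
  qed
  have g: "\<And>Q::real. Q > 0 \<Longrightarrow> 2*e/sd * inverse (e*Q/sd^2) = 2 * sd/Q"
    using e sd by (simp add: field_simps power2_eq_square)
  show ?thesis unfolding h by (rule g[OF qpos])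
qed

lemma mono_alg:
  fixes b c e x :: real
  assumes "b \<ge> 0" "b + 2*c > 0" "b + 4*c + 4*e \<ge> 0" "0 \<le> x" "x \<le> 1"
  shows "b + (1+3*x)*c + 2*x*(1+x)*e \<ge> 0"
proof -
  have "b + (1+3*x)*c + 2*x*(1+x)*e = (1-x)^2/2 * b + (1-x)*(1+2*x)/2 * (b+2*c) + x*(1+x)/2 * (b+4*c+4*e)"
    by (simp add: field_simps power2_eq_square)
  also have "\<dots> \<ge> 0"
  proof -
    have t1: "(1-x)^2/2 * b \<ge> 0" using assms by simp
    have t2: "(1-x)*(1+2*x)/2 * (b+2*c) \<ge> 0" using assms by (intro mult_nonneg_nonneg divide_nonneg_nonneg) auto
    have t3: "x*(1+x)/2 * (b+4*c+4*e) \<ge> 0" using assms by (intro mult_nonneg_nonneg divide_nonneg_nonneg) auto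
    show ?thesis using t1 t2 t3 by linarith
  qed
  finally show ?thesis .
qed



lemma tangent_fact:
  fixes B C :: "'a::real_inner"
  assumes a: "0 \<le> a" "a \<le> 1" and p: "B \<bullet> (B + 2 *\<^sub>R C) > 0"
  shows "(B + (2*a) *\<^sub>R C) \<bullet> B > 0"
proof -
  have "B \<noteq> 0" using p by auto
  then have bb: "B \<bullet> B > 0" by simp
  have eq: "(B + (2*a) *\<^sub>R C) \<bullet> B = (1-a) * (B \<bullet> B) + a * (B \<bullet> (B + 2 *\<^sub>R C))"
    by (simp add: inner_simps inner_commute algebra_simps)
  show ?thesis
  proof (cases "a < 1")
    case True
    then have "(1-a) * (B \<bullet> B) > 0" using bb by simp
    moreover have "a * (B \<bullet> (B + 2 *\<^sub>R C)) \<ge> 0" using a p by simp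
    ultimately show ?thesis unfolding eq by linarith
  next
    case False
    then have "a = 1" using a by simp
    then show ?thesis unfolding eq using p by simp
  qed
qed

lemma generic_mono:
  fixes A B C :: "'a::real_inner"
  defines "z \<equiv> \<lambda>a. A + a *\<^sub>R B + (a^2) *\<^sub>R C"
  assumes pos: "B \<bullet> (B + 2 *\<^sub>R C) > 0" and ab: "0 \<le> a" "a \<le> b" "b \<le> 1"
  shows "(norm (z b - z 1))^2 \<le> (norm (z a - z 1))^2"
proof -
  define g where "g = (\<lambda>x::real. (x-1)^2*(B\<bullet>B) + 2*(x-1)*(x^2-1)*(B\<bullet>C) + (x^2-1)^2*(C\<bullet>C))"
  have geq: "(norm (z x - z 1))^2 = g x" for x
  proof -
    have "z x - z 1 = (x-1) *\<^sub>R B + (x^2-1) *\<^sub>R C"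
      unfolding z_def by (simp add: algebra_simps)
    then have "(norm (z x - z 1))^2 = ((x-1) *\<^sub>R B + (x^2-1) *\<^sub>R C) \<bullet> ((x-1) *\<^sub>R B + (x^2-1) *\<^sub>R C)"
      by (simp only: power2_norm_eq_inner)
    also have "\<dots> = g x"
      unfolding g_def by (simp add: inner_simps inner_commute algebra_simps power2_eq_square)
    finally show ?thesis .
  qed
  have pos': "B\<bullet>B + 2*(B\<bullet>C) > 0" using pos by (simp add: inner_simps)
  have qq: "B\<bullet>B + 4*(B\<bullet>C) + 4*(C\<bullet>C) \<ge> 0"
  proof -
    have "(B + 2 *\<^sub>R C) \<bullet> (B + 2 *\<^sub>R C) \<ge> 0" by simp
    then show ?thesis by (simp add: inner_simps inner_commute algebra_simps)
  qed
  have "g b \<le> g a"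
  proof (rule DERIV_nonpos_imp_nonincreasing[OF \<open>a \<le> b\<close>])
    fix x assume x: "a \<le> x" "x \<le> b"
    have d: "DERIV g x :> -2*((1-x)*(B\<bullet>B + (1+3*x)*(B\<bullet>C) + 2*x*(1+x)*(C\<bullet>C)))"
      unfolding g_def by (auto intro!: derivative_eq_intros simp: algebra_simps power2_eq_square)
    have "B\<bullet>B + (1+3*x)*(B\<bullet>C) + 2*x*(1+x)*(C\<bullet>C) \<ge> 0"
      by (rule mono_alg) (use pos' qq x ab in auto)
    moreover have "1 - x \<ge> 0" using x ab by simp
    ultimately have "-2*((1-x)*(B\<bullet>B + (1+3*x)*(B\<bullet>C) + 2*x*(1+x)*(C\<bullet>C))) \<le> 0"
      using mult_nonneg_nonneg[of "1-x" "B\<bullet>B + (1+3*x)*(B\<bullet>C) + 2*x*(1+x)*(C\<bullet>C)"] by linarith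
    with d show "\<exists>y. DERIV g x :> y \<and> y \<le> 0" by blast
  qed
  then show ?thesis using geq by simp
qed

lemma generic_gauss:
  fixes A B C :: "'a::real_inner"
  defines "z \<equiv> \<lambda>a. A + a *\<^sub>R B + (a^2) *\<^sub>R C"
  assumes pos: "B \<bullet> (B + 2 *\<^sub>R C) > 0"
  shows "(\<forall>\<alpha>\<in>{0..1}. vector_derivative z (at \<alpha> within {0..1}) \<noteq> 0)
    \<and> gauss_integrand z integrable_on {0..1} \<and> gauss_length z < pi/2"
proof -
  define w where "w = (\<lambda>a. B + (2*a) *\<^sub>R C)"
  define q where "q = (\<lambda>a::real. B\<bullet>B + 4*a*(B\<bullet>C) + 4*a^2*(C\<bullet>C))"
  define D where "D = (\<lambda>x. (1 / sqrt (q x)) *\<^sub>R (2 *\<^sub>R C - ((4*(B\<bullet>C) + 8*x*(C\<bullet>C)) / (2 * q x)) *\<^sub>R w x))"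
  define \<Delta> where "\<Delta> = (B\<bullet>B)*(C\<bullet>C) - (B\<bullet>C)^2"
  have vd: "vector_derivative z (at x within {0..1}) = w x" if "x \<in> {0..1}" for x
  proof -
    have "(z has_vector_derivative w x) (at x within {0..1})"
      unfolding z_def w_def by (rule has_vector_derivative_at_within[OF zder])
    then show ?thesis using vector_derivative_within_cbox[of 0 1 x z "w x"] that by simp
  qed
  have wpos: "w x \<bullet> B > 0" if "x \<in> {0..1}" for x
    using tangent_fact[of x B C] that pos unfolding w_def by auto
  have wnz: "w x \<noteq> 0" if "x \<in> {0..1}" for x using wpos[OF that] by auto
  have qeq: "q x = (norm (w x))^2" for x unfolding q_def w_def by (simp add: wnorm)
  have qpos: "q x > 0" if "x \<in> {0..1}" for x using wnz[OF that] qeq by simp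
  have ut: "unit_tangent z x = (1 / sqrt (q x)) *\<^sub>R w x" if "x \<in> {0..1}" for x
    unfolding unit_tangent_def vd[OF that] qeq by (simp add: divide_inverse)
  have utd: "(unit_tangent z has_vector_derivative D x) (at x within {0..1})" if "x \<in> {0..1}" for x
  proof -
    have "((\<lambda>a. (1/sqrt(q a)) *\<^sub>R w a) has_vector_derivative D x) (at x)"
      unfolding D_def q_def w_def by (rule unit_der) (use qpos[OF that] in \<open>simp add: q_def\<close>)
    then have "((\<lambda>a. (1/sqrt(q a)) *\<^sub>R w a) has_vector_derivative D x) (at x within {0..1})"
      by (rule has_vector_derivative_at_within)
    note h = this
    show ?thesis
      by (rule has_vector_derivative_transform[OF that _ h]) (simp add: ut)
  qed
  have gi: "gauss_integrand z x = 2 * sqrt \<Delta> / q x" if "x\<in>{0..1}" for x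
  proof -
    have "vector_derivative (unit_tangent z) (at x within {0..1}) = D x"
      using vector_derivative_within_cbox[of 0 1 x "unit_tangent z" "D x"] utd[OF that] that by simp
    moreover have "norm (D x) = 2 * sqrt \<Delta> / q x"
      unfolding D_def w_def q_def \<Delta>_def by (rule unit_der_norm) (use qpos[OF that] in \<open>simp add: q_def\<close>)
    ultimately show ?thesis unfolding gauss_integrand_def by simp
  qed
  have cs: "\<Delta> \<ge> 0" unfolding \<Delta>_def by (metis Cauchy_Schwarz_ineq diff_ge_0_iff_ge)
  have pos': "B\<bullet>B + 2*(B\<bullet>C) > 0" using pos by (simp add: inner_simps)
  have part1: "\<forall>\<alpha>\<in>{0..1}. vector_derivative z (at \<alpha> within {0..1}) \<noteq> 0"
    using vd wnz by simp
  show ?thesis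
  proof (cases "\<Delta> = 0")
    case True
    have hi0: "(gauss_integrand z has_integral 0) {0..1}"
      by (subst has_integral_cong[where g="\<lambda>_. 0"]) (auto simp: gi True)
    then have "gauss_integrand z integrable_on {0..1}" by (rule has_integral_integrable)
    moreover have "gauss_length z = 0" unfolding gauss_length_def using hi0 by (rule integral_unique)
    ultimately show ?thesis using part1 pi_gt_zero by simp
  next
    case False
    then have Dp: "\<Delta> > 0" using cs by simp
    define sd where "sd = sqrt \<Delta>"
    have sd: "sd^2 = (B\<bullet>B)*(C\<bullet>C) - (B\<bullet>C)^2" "sd > 0" using Dp unfolding sd_def \<Delta>_def by auto
    have ep: "C\<bullet>C > 0"
    proof (rule ccontr)
      assume "\<not> C\<bullet>C > 0"
      then have "C\<bullet>C = 0" using inner_ge_zero[of C] by simp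
      then show False using Dp unfolding \<Delta>_def by (simp add: power2_eq_square)
    qed
    define F where "F = (\<lambda>x. arctan ((2*x*(C\<bullet>C) + (B\<bullet>C)) / sd))"
    have Fd: "(F has_vector_derivative (2 * sqrt \<Delta> / q x)) (at x within {0..1})" if "x \<in> {0..1}" for x
    proof -
      have d: "(F has_real_derivative 2*(C\<bullet>C)/sd * inverse (1 + ((2*x*(C\<bullet>C) + (B\<bullet>C)) / sd)^2)) (at x)"
        unfolding F_def using sd(2) by (auto intro!: derivative_eq_intros simp: field_simps)
      have eq: "2*(C\<bullet>C)/sd * inverse (1 + ((2*x*(C\<bullet>C) + (B\<bullet>C)) / sd)^2) = 2 * sd / (B\<bullet>B + 4*x*(B\<bullet>C) + 4*x^2*(C\<bullet>C))"
        by (rule arctan_deriv_alg[OF sd ep])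
      have d1: "(F has_real_derivative (2 * sqrt \<Delta> / q x)) (at x)"
        using d[unfolded eq] unfolding q_def sd_def .
      then have "(F has_vector_derivative (2 * sqrt \<Delta> / q x)) (at x)"
        by (simp only: has_real_derivative_iff_has_vector_derivative)
      then show ?thesis by (rule has_vector_derivative_at_within)
    qed
    have "((\<lambda>x. 2 * sqrt \<Delta> / q x) has_integral (F 1 - F 0)) {0..1}"
      by (rule fundamental_theorem_of_calculus) (simp_all add: Fd)
    then have hi: "(gauss_integrand z has_integral (F 1 - F 0)) {0..1}"
      by (subst has_integral_cong[where g="\<lambda>x. 2 * sqrt \<Delta> / q x"]) (auto simp: gi)
    have "F 1 - F 0 < pi/2"
      unfolding F_def
    proof (rule arctan_diff_lt)
      have "1 + (2*1*(C\<bullet>C) + (B\<bullet>C)) / sd * ((2*0*(C\<bullet>C) + (B\<bullet>C)) / sd)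
          = (C\<bullet>C) * (B\<bullet>B + 2*(B\<bullet>C)) / sd^2"
        using sd by (simp add: field_simps power2_eq_square)
      also have "\<dots> > 0" using ep pos' sd(2) by (intro divide_pos_pos mult_pos_pos) auto
      finally show "1 + (2*1*(C\<bullet>C) + (B\<bullet>C)) / sd * ((2*0*(C\<bullet>C) + (B\<bullet>C)) / sd) > 0" .
    qed
    moreover have "gauss_integrand z integrable_on {0..1}" using hi by (rule has_integral_integrable)
    moreover have "gauss_length z = F 1 - F 0" unfolding gauss_length_def using hi by (rule integral_unique)
    ultimately show ?thesis using part1 by simp
  qed
qed


lemma vec_two_times: "(2::real^'a^'b) * x = 2 *\<^sub>R x" "x * (2::real^'a^'b) = 2 *\<^sub>R x"
  by (simp_all add: vec_eq_iff)

theorem mainTheorem4: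
  fixes X :: "real^'n^'d"
    and V0 VT :: "real^'k^'m"
    and W0 WT :: "real^'d^'k"
    and Y :: "real^'n^'m"
  assumes hY: "Y = (VT ** WT) ** X"
    and hne: "(V0 ** W0) ** X \<noteq> Y"
    and hpos: "(((VT - V0) ** W0 + V0 ** (WT - W0)) ** X) \<bullet> (((VT - V0) ** WT + VT ** (WT - W0)) ** X) > 0"
  shows "(\<forall>\<alpha>\<in>{0..1}. vector_derivative (zcurve V0 VT W0 WT X) (at \<alpha> within {0..1}) \<noteq> 0)
    \<and> gauss_integrand (zcurve V0 VT W0 WT X) integrable_on {0..1}
    \<and> gauss_length (zcurve V0 VT W0 WT X) < pi / 2
    \<and> (\<forall>a b. 0 \<le> a \<longrightarrow> a \<le> b \<longrightarrow> b \<le> 1 \<longrightarrow>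
          1 / (2 * real CARD('n)) * (norm (zcurve V0 VT W0 WT X b - Y))\<^sup>2
        \<le> 1 / (2 * real CARD('n)) * (norm (zcurve V0 VT W0 WT X a - Y))\<^sup>2)"
proof -
  define A where "A = (V0 ** W0) ** X"
  define B where "B = ((VT - V0) ** W0 + V0 ** (WT - W0)) ** X"
  define C where "C = ((VT - V0) ** (WT - W0)) ** X"
  have zeq: "zcurve V0 VT W0 WT X = (\<lambda>a. A + a *\<^sub>R B + (a^2) *\<^sub>R C)"
    unfolding A_def B_def C_def by (rule ext, rule zexp)
  have BC: "B + 2 *\<^sub>R C = ((VT - V0) ** WT + VT ** (WT - W0)) ** X"
    unfolding B_def C_def
    by (simp add: matrix_add_ldistrib matrix_add_rdistrib' matrix_diff_rdistrib' matrix_diff_ldistrib'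
        matrix_mul_assoc scaleR_diff_right algebra_simps vec_two_times scalar_matrix_assoc[symmetric])
  have pos: "B \<bullet> (B + 2 *\<^sub>R C) > 0" unfolding BC using hpos unfolding B_def .
  have Y1: "Y = zcurve V0 VT W0 WT X 1" unfolding hY zcurve_def by simp
  have G: "(\<forall>\<alpha>\<in>{0..1}. vector_derivative (zcurve V0 VT W0 WT X) (at \<alpha> within {0..1}) \<noteq> 0)
    \<and> gauss_integrand (zcurve V0 VT W0 WT X) integrable_on {0..1}
    \<and> gauss_length (zcurve V0 VT W0 WT X) < pi / 2"
    unfolding zeq by (rule generic_gauss[OF pos])
  have M: "1 / (2 * real CARD('n)) * (norm (zcurve V0 VT W0 WT X b - Y))\<^sup>2
        \<le> 1 / (2 * real CARD('n)) * (norm (zcurve V0 VT W0 WT X a - Y))\<^sup>2"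
    if "0 \<le> a" "a \<le> b" "b \<le> 1" for a b
  proof -
    have "(norm (zcurve V0 VT W0 WT X b - Y))\<^sup>2 \<le> (norm (zcurve V0 VT W0 WT X a - Y))\<^sup>2"
      unfolding Y1 unfolding zeq by (rule generic_mono[OF pos that])
    then show ?thesis by (rule mult_left_mono) simp
  qed
  show ?thesis using G M by blast
qed

end
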